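(* Let $\tilde F:E^c\to E^c$ be $\Gamma$-equivariant, and let $f$ and $h$ denote its $z_1$- and $w_1$-components, respectively (so $\tilde F=[f,h]$). Then $R_\phi\tilde F(\Phi)=\tilde F(R_\phi\Phi)$ for all $\Phi\in E^c\cap R_{-\phi}E^c=\{(z_1,z_2,0,w_2,w_3,0)\}$ if and only if $$f(z_1,z_2,0,w_2,w_3,0)=h(w_2,w_3,z_1,0,0,\bar z_2)\quad\text{for all }z_1,z_2,w_2,w_3\in\mathbb C,$$ equivalently $h(z_1,z_2,w_1,0,0,w_4)=f(w_1,\bar w_4,0,z_1,z_2,0)$ for all $z_1,z_2,w_1,w_4$.
   Context: $[4,8]$ mode interaction: integers $l_1>l_2>n_2>0$ with $l_1^2=l_2^2+n_2^2$. Wave vectors $q_1=(l_1,0)$, $q_2=(0,l_1)$, $p_1=(l_2,n_2)$, $p_2=(l_2,-n_2)$, $p_3=(n_2,l_2)$, $p_4=(n_2,-l_2)$; $\tilde A=\{\pm q_i,\pm p_j\}$. $E^c$ is the real space of functions $a$ supported in $\tilde A$ with $a(-k)=\overline{a(k)}$, with coordinates $(z_1,z_2,w_1,\dots,w_4)$, $z_i=a(q_i)$, $w_j=a(p_j)$. Group actions on functions: $(\gamma a)(k)=a(\gamma^{-1}k)$ for $\gamma\in O(2)$, $(T_{s,t}a)(k)=e^{-i(sk_x+tk_y)}a(k)$; $R_\theta$ = counterclockwise rotation by $\theta$; $\phi=\arctan(n_2/l_2)$ (so $R_\phi q_1=p_1$). $\Gamma=D_4\dot+T^2$ is generated by $\gamma_1(x,y)=(-x,y)$,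 $\gamma_2(x,y)=(y,x)$ and translations with $(s,t)\in(\mathbb R/2\pi\mathbb Z)^2$. *)

theory Defs
  imports "HOL-Analysis.Analysis"
begin

type_synonym wvec = "real \<times> real"
type_synonym wfun = "wvec \<Rightarrow> complex"

definition q1 :: "int \<Rightarrow> wvec" where "q1 l1 = (of_int l1, 0)"
definition q2 :: "int \<Rightarrow> wvec" where "q2 l1 = (0, of_int l1)"
definition p1 :: "int \<Rightarrow> int \<Rightarrow> wvec" where "p1 l2 n2 = (of_int l2, of_int n2)"
definition p2 :: "int \<Rightarrow> int \<Rightarrow> wvec" where "p2 l2 n2 = (of_int l2, - of_int n2)"
definition p3 :: "int \<Rightarrow> int \<Rightarrow> wvec" where "p3 l2 n2 = (of_int n2, of_int l2)"
definition p4 :: "int \<Rightarrow> int \<Rightarrow> wvec" where "p4 l2 n2 = (of_int n2, - of_int l2)"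

definition Atilde :: "int \<Rightarrow> int \<Rightarrow> int \<Rightarrow> wvec set" where
  "Atilde l1 l2 n2 =
     (let B = {q1 l1, q2 l1, p1 l2 n2, p2 l2 n2, p3 l2 n2, p4 l2 n2} in B \<union> uminus ` B)"

definition Ec :: "int \<Rightarrow> int \<Rightarrow> int \<Rightarrow> wfun set" where
  "Ec l1 l2 n2 = {a. (\<forall>k. k \<notin> Atilde l1 l2 n2 \<longrightarrow> a k = 0) \<and> (\<forall>k. a (- k) = cnj (a k))}"

definition emb :: "int \<Rightarrow> int \<Rightarrow> int \<Rightarrow> complex \<Rightarrow> complex \<Rightarrow> complex \<Rightarrow> complex
    \<Rightarrow> complex \<Rightarrow> complex \<Rightarrow> wfun" where
  "emb l1 l2 n2 z1 z2 w1 w2 w3 w4 = (\<lambda>k.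
     if k = q1 l1 then z1 else if k = - q1 l1 then cnj z1
     else if k = q2 l1 then z2 else if k = - q2 l1 then cnj z2
     else if k = p1 l2 n2 then w1 else if k = - p1 l2 n2 then cnj w1
     else if k = p2 l2 n2 then w2 else if k = - p2 l2 n2 then cnj w2
     else if k = p3 l2 n2 then w3 else if k = - p3 l2 n2 then cnj w3
     else if k = p4 l2 n2 then w4 else if k = - p4 l2 n2 then cnj w4
     else 0)"

definition rot :: "real \<Rightarrow> wvec \<Rightarrow> wvec" where
  "rot \<theta> k = (cos \<theta> * fst k - sin \<theta> * snd k, sin \<theta> * fst k + cos \<theta> * snd k)"

definition rot_act :: "real \<Rightarrow> wfun \<Rightarrow> wfun" where
  "rot_act \<theta> a = (\<lambda>k. a (rot (- \<theta>) k))"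

definition lin_act :: "(wvec \<Rightarrow> wvec) \<Rightarrow> wfun \<Rightarrow> wfun" where
  "lin_act g a = (\<lambda>k. a (inv g k))"

definition gamma1 :: "wvec \<Rightarrow> wvec" where "gamma1 k = (- fst k, snd k)"
definition gamma2 :: "wvec \<Rightarrow> wvec" where "gamma2 k = (snd k, fst k)"

definition trans_act :: "real \<Rightarrow> real \<Rightarrow> wfun \<Rightarrow> wfun" where
  "trans_act s t a = (\<lambda>k. exp (- \<i> * complex_of_real (s * fst k + t * snd k)) * a k)"

text \<open>Gamma = D4 + T^2 equivariance on E^c: commuting with the generators
  gamma1, gamma2 and all translations T_{s,t}.\<close>
definition Gamma_equivariant :: "int \<Rightarrow> int \<Rightarrow> int \<Rightarrow> (wfun \<Rightarrow> wfun) \<Rightarrow> bool" where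
  "Gamma_equivariant l1 l2 n2 F \<longleftrightarrow>
     (\<forall>a\<in>Ec l1 l2 n2. F (lin_act gamma1 a) = lin_act gamma1 (F a)) \<and>
     (\<forall>a\<in>Ec l1 l2 n2. F (lin_act gamma2 a) = lin_act gamma2 (F a)) \<and>
     (\<forall>s t. \<forall>a\<in>Ec l1 l2 n2. F (trans_act s t a) = trans_act s t (F a))"

definition phi :: "int \<Rightarrow> int \<Rightarrow> real" where
  "phi l2 n2 = arctan (of_int n2 / of_int l2)"

definition f_comp :: "int \<Rightarrow> int \<Rightarrow> int \<Rightarrow> (wfun \<Rightarrow> wfun) \<Rightarrow> complex \<Rightarrow> complex \<Rightarrow> complex
    \<Rightarrow> complex \<Rightarrow> complex \<Rightarrow> complex \<Rightarrow> complex" where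
  "f_comp l1 l2 n2 F z1 z2 w1 w2 w3 w4 = F (emb l1 l2 n2 z1 z2 w1 w2 w3 w4) (q1 l1)"

definition h_comp :: "int \<Rightarrow> int \<Rightarrow> int \<Rightarrow> (wfun \<Rightarrow> wfun) \<Rightarrow> complex \<Rightarrow> complex \<Rightarrow> complex
    \<Rightarrow> complex \<Rightarrow> complex \<Rightarrow> complex \<Rightarrow> complex" where
  "h_comp l1 l2 n2 F z1 z2 w1 w2 w3 w4 = F (emb l1 l2 n2 z1 z2 w1 w2 w3 w4) (p1 l2 n2)"

end

theory Submission
  imports Defs
begin

lemma nt1: fixes aa bb cc :: int
  assumes c: "coprime bb cc" and p: "aa^2 = bb^2 + cc^2" and o: "aa > bb" "bb > cc" "cc > 0"
  shows "\<not> aa dvd (bb^2 - cc^2)"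
proof
  assume h: "aa dvd (bb^2 - cc^2)"
  have e: "bb^2 - cc^2 = 2 * bb^2 - aa^2" using p by simp
  have "aa dvd aa^2" by (simp add: power2_eq_square)
  then have "aa dvd (bb^2 - cc^2) + aa^2" using h by (rule dvd_add[rotated])
  then have "aa dvd 2 * bb^2" unfolding e by simp
  moreover have "coprime aa (bb^2)"
  proof -
    have "coprime (bb^2) (cc^2)" using c by simp
    then have "coprime (bb^2) (bb^2 + cc^2)" by (simp add: coprime_iff_gcd_eq_1)
    then have "coprime (bb^2) (aa^2)" using p by simp
    then show ?thesis by (simp add: coprime_commute)
  qed
  ultimately have "aa dvd 2" by (simp add: coprime_dvd_mult_left_iff)
  then have "aa \<le> 2" by (simp add: zdvd_imp_le)
  then show False using o by simp
qed

lemma nt2: fixes bb cc :: int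
  assumes c: "coprime bb cc" and o: "bb > cc" "cc > 0"
  shows "bb^2 \<noteq> 3 * cc^2"
proof
  assume h: "bb^2 = 3 * cc^2"
  have "coprime (cc^2) (bb^2)" using c by (simp add: coprime_commute)
  moreover have "cc^2 dvd bb^2" using h by simp
  ultimately have "is_unit (cc^2)" by (meson coprime_common_divisor dvd_refl)
  then have "cc^2 = 1" using o by (simp add: zdvd1_eq)
  then have "cc = 1" using o by (simp add: power2_eq_square zmult_eq_1_iff)
  then have "bb \<ge> 2" using o by simp
  then have "bb * bb \<ge> 2 * 2" by (intro mult_mono) auto
  then show False using h \<open>cc = 1\<close> by (simp add: power2_eq_square)
qed

locale trip =
  fixes l1 l2 n2 :: int
  assumes l12: "l1 > l2" and l2n: "l2 > n2" and n0: "n2 > 0" and pyth: "l1^2 = l2^2 + n2^2"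
begin
lemma R: "real_of_int l1 > of_int l2" "real_of_int l2 > of_int n2" "real_of_int n2 > 0"
  "(real_of_int l1)^2 = (of_int l2)^2 + (of_int n2)^2"
  using l12 l2n n0 apply auto
  by (metis of_int_add of_int_power pyth)

lemmas vdefs = q1_def q2_def p1_def p2_def p3_def p4_def

definition "V = [q1 l1, -q1 l1, q2 l1, - q2 l1, p1 l2 n2, -p1 l2 n2, p2 l2 n2, -p2 l2 n2,
   p3 l2 n2, -p3 l2 n2, p4 l2 n2, -p4 l2 n2]"
lemma dist: "distinct V"
  using R(1-3) unfolding V_def by (simp add: vdefs)

abbreviation "E \<equiv> emb l1 l2 n2"
abbreviation "Q1 \<equiv> q1 l1"
abbreviation "Q2 \<equiv> q2 l1"
abbreviation "P1 \<equiv> p1 l2 n2"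
abbreviation "P2 \<equiv> p2 l2 n2"
abbreviation "P3 \<equiv> p3 l2 n2"
abbreviation "P4 \<equiv> p4 l2 n2"

lemma neqs:
  "Q1 \<noteq> (-Q1)"
  "Q1 \<noteq> Q2"
  "Q1 \<noteq> (-Q2)"
  "Q1 \<noteq> P1"
  "Q1 \<noteq> (-P1)"
  "Q1 \<noteq> P2"
  "Q1 \<noteq> (-P2)"
  "Q1 \<noteq> P3"
  "Q1 \<noteq> (-P3)"
  "Q1 \<noteq> P4"
  "Q1 \<noteq> (-P4)"
  "(-Q1) \<noteq> Q1"
  "(-Q1) \<noteq> Q2"
  "(-Q1) \<noteq> (-Q2)"
  "(-Q1) \<noteq> P1"
  "(-Q1) \<noteq> (-P1)"
  "(-Q1) \<noteq> P2"
  "(-Q1) \<noteq> (-P2)"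
  "(-Q1) \<noteq> P3"
  "(-Q1) \<noteq> (-P3)"
  "(-Q1) \<noteq> P4"
  "(-Q1) \<noteq> (-P4)"
  "Q2 \<noteq> Q1"
  "Q2 \<noteq> (-Q1)"
  "Q2 \<noteq> (-Q2)"
  "Q2 \<noteq> P1"
  "Q2 \<noteq> (-P1)"
  "Q2 \<noteq> P2"
  "Q2 \<noteq> (-P2)"
  "Q2 \<noteq> P3"
  "Q2 \<noteq> (-P3)"
  "Q2 \<noteq> P4"
  "Q2 \<noteq> (-P4)"
  "(-Q2) \<noteq> Q1"
  "(-Q2) \<noteq> (-Q1)"
  "(-Q2) \<noteq> Q2"
  "(-Q2) \<noteq> P1"
  "(-Q2) \<noteq> (-P1)"
  "(-Q2) \<noteq> P2"
  "(-Q2) \<noteq> (-P2)"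
  "(-Q2) \<noteq> P3"
  "(-Q2) \<noteq> (-P3)"
  "(-Q2) \<noteq> P4"
  "(-Q2) \<noteq> (-P4)"
  "P1 \<noteq> Q1"
  "P1 \<noteq> (-Q1)"
  "P1 \<noteq> Q2"
  "P1 \<noteq> (-Q2)"
  "P1 \<noteq> (-P1)"
  "P1 \<noteq> P2"
  "P1 \<noteq> (-P2)"
  "P1 \<noteq> P3"
  "P1 \<noteq> (-P3)"
  "P1 \<noteq> P4"
  "P1 \<noteq> (-P4)"
  "(-P1) \<noteq> Q1"
  "(-P1) \<noteq> (-Q1)"
  "(-P1) \<noteq> Q2"
  "(-P1) \<noteq> (-Q2)"
  "(-P1) \<noteq> P1"
  "(-P1) \<noteq> P2"
  "(-P1) \<noteq> (-P2)"
  "(-P1) \<noteq> P3"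
  "(-P1) \<noteq> (-P3)"
  "(-P1) \<noteq> P4"
  "(-P1) \<noteq> (-P4)"
  "P2 \<noteq> Q1"
  "P2 \<noteq> (-Q1)"
  "P2 \<noteq> Q2"
  "P2 \<noteq> (-Q2)"
  "P2 \<noteq> P1"
  "P2 \<noteq> (-P1)"
  "P2 \<noteq> (-P2)"
  "P2 \<noteq> P3"
  "P2 \<noteq> (-P3)"
  "P2 \<noteq> P4"
  "P2 \<noteq> (-P4)"
  "(-P2) \<noteq> Q1"
  "(-P2) \<noteq> (-Q1)"
  "(-P2) \<noteq> Q2"
  "(-P2) \<noteq> (-Q2)"
  "(-P2) \<noteq> P1"
  "(-P2) \<noteq> (-P1)"
  "(-P2) \<noteq> P2"
  "(-P2) \<noteq> P3"
  "(-P2) \<noteq> (-P3)"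
  "(-P2) \<noteq> P4"
  "(-P2) \<noteq> (-P4)"
  "P3 \<noteq> Q1"
  "P3 \<noteq> (-Q1)"
  "P3 \<noteq> Q2"
  "P3 \<noteq> (-Q2)"
  "P3 \<noteq> P1"
  "P3 \<noteq> (-P1)"
  "P3 \<noteq> P2"
  "P3 \<noteq> (-P2)"
  "P3 \<noteq> (-P3)"
  "P3 \<noteq> P4"
  "P3 \<noteq> (-P4)"
  "(-P3) \<noteq> Q1"
  "(-P3) \<noteq> (-Q1)"
  "(-P3) \<noteq> Q2"
  "(-P3) \<noteq> (-Q2)"
  "(-P3) \<noteq> P1"
  "(-P3) \<noteq> (-P1)"
  "(-P3) \<noteq> P2"
  "(-P3) \<noteq> (-P2)"
  "(-P3) \<noteq> P3"
  "(-P3) \<noteq> P4"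
  "(-P3) \<noteq> (-P4)"
  "P4 \<noteq> Q1"
  "P4 \<noteq> (-Q1)"
  "P4 \<noteq> Q2"
  "P4 \<noteq> (-Q2)"
  "P4 \<noteq> P1"
  "P4 \<noteq> (-P1)"
  "P4 \<noteq> P2"
  "P4 \<noteq> (-P2)"
  "P4 \<noteq> P3"
  "P4 \<noteq> (-P3)"
  "P4 \<noteq> (-P4)"
  "(-P4) \<noteq> Q1"
  "(-P4) \<noteq> (-Q1)"
  "(-P4) \<noteq> Q2"
  "(-P4) \<noteq> (-Q2)"
  "(-P4) \<noteq> P1"
  "(-P4) \<noteq> (-P1)"
  "(-P4) \<noteq> P2"
  "(-P4) \<noteq> (-P2)"
  "(-P4) \<noteq> P3"
  "(-P4) \<noteq> (-P3)"
  "(-P4) \<noteq> P4"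
  using R(1-3) by (simp_all add: vdefs)

lemma emb_vals:
  "E z1 z2 w1 w2 w3 w4 Q1 = z1" "E z1 z2 w1 w2 w3 w4 (-Q1) = cnj z1"
  "E z1 z2 w1 w2 w3 w4 Q2 = z2" "E z1 z2 w1 w2 w3 w4 (-Q2) = cnj z2"
  "E z1 z2 w1 w2 w3 w4 P1 = w1" "E z1 z2 w1 w2 w3 w4 (-P1) = cnj w1"
  "E z1 z2 w1 w2 w3 w4 P2 = w2" "E z1 z2 w1 w2 w3 w4 (-P2) = cnj w2"
  "E z1 z2 w1 w2 w3 w4 P3 = w3" "E z1 z2 w1 w2 w3 w4 (-P3) = cnj w3"
  "E z1 z2 w1 w2 w3 w4 P4 = w4" "E z1 z2 w1 w2 w3 w4 (-P4) = cnj w4"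
  by (simp_all add: emb_def neqs)

lemma emb_supp: "E z1 z2 w1 w2 w3 w4 k \<noteq> 0 \<Longrightarrow> k \<in> set V"
  unfolding V_def emb_def by (auto split: if_splits)

lemma Atilde_V: "Atilde l1 l2 n2 = set V"
  unfolding V_def Atilde_def Let_def by auto

lemma emb_Ec: "E z1 z2 w1 w2 w3 w4 \<in> Ec l1 l2 n2"
proof -
  have "E z1 z2 w1 w2 w3 w4 (- k) = cnj (E z1 z2 w1 w2 w3 w4 k)" for k
  proof (cases "k \<in> set V")
    case True
    then show ?thesis unfolding V_def by (auto simp: emb_vals)
  next
    case False
    then have "- k \<notin> set V" unfolding V_def by (auto simp: minus_equation_iff[of k])
    then show ?thesis using False emb_supp by (metis complex_cnj_zero)
  qed
  then show ?thesis unfolding Ec_def Atilde_V using emb_supp by blast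
qed

lemma emb_eq: assumes "a \<in> Ec l1 l2 n2"
  shows "a = E (a Q1) (a Q2) (a P1) (a P2) (a P3) (a P4)"
proof
  fix k
  have c: "a (-k) = cnj (a k)" for k using assms unfolding Ec_def by blast
  show "a k = E (a Q1) (a Q2) (a P1) (a P2) (a P3) (a P4) k"
  proof (cases "k \<in> set V")
    case True
    then show ?thesis unfolding V_def by (auto simp: emb_vals c)
  next
    case False
    have "a k = 0" using False assms unfolding Ec_def Atilde_V by blast
    moreover have "E (a Q1) (a Q2) (a P1) (a P2) (a P3) (a P4) k = 0" using False emb_supp by blast
    ultimately show ?thesis by simp
  qed
qed

lemma cphi: "cos (phi l2 n2) = of_int l2 / of_int l1" "sin (phi l2 n2) = of_int n2 / of_int l1"
proof -
  have "1 + (of_int n2 / of_int l2)^2 = (of_int l1 / of_int l2 :: real)^2"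
    using R by (simp add: field_simps)
  then have s: "sqrt (1 + (of_int n2 / of_int l2)^2) = of_int l1 / of_int l2"
    using R by simp
  show "cos (phi l2 n2) = of_int l2 / of_int l1" "sin (phi l2 n2) = of_int n2 / of_int l1"
    unfolding phi_def cos_arctan sin_arctan s using R by auto
qed

lemma rot_neg: "rot t (- k) = - rot t k" unfolding rot_def by auto
lemma rot_inv1: "rot (-t) (rot t k) = k"
  unfolding rot_def apply (simp add: algebra_simps)
  by (metis (no_types, opaque_lifting) distrib_left mult.commute mult.left_commute mult_1_right prod.collapse sin_cos_squared_add3)
lemma rot_inv2: "rot t (rot (-t) k) = k"
  using rot_inv1[of "-t"] by simp

lemma rots: "rot (phi l2 n2) Q1 = P1" "rot (phi l2 n2) Q2 = - P4"
  "rot (phi l2 n2) P2 = Q1" "rot (phi l2 n2) P3 = Q2"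
  using R unfolding rot_def cphi vdefs by (auto simp: field_simps power2_eq_square)

lemma nt_ex: "\<exists>dd aa bb cc. dd > 0 \<and> l1 = dd * aa \<and> l2 = dd * bb \<and> n2 = dd * cc \<and> coprime bb cc
  \<and> aa^2 = bb^2 + cc^2 \<and> aa > bb \<and> bb > cc \<and> cc > 0 \<and> \<not> aa dvd (bb^2 - cc^2) \<and> bb^2 \<noteq> 3 * cc^2"
proof -
  define dd where "dd = gcd l2 n2"
  define aa where "aa = l1 div dd"
  define bb where "bb = l2 div dd"
  define cc where "cc = n2 div dd"
  have d0: "dd > 0" unfolding dd_def using n0 by simp
  have "dd dvd l2" "dd dvd n2" by (simp_all add: dd_def)
  then have "dd^2 dvd l2^2 + n2^2" by (intro dvd_add dvd_power_same)
  then have "dd^2 dvd l1^2" using pyth by simp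
  then have "dd dvd l1" using pow_divides_pow_iff[of 2 dd l1] by simp
  then have l1: "l1 = dd * aa" unfolding aa_def by simp
  have l2: "l2 = dd * bb" unfolding bb_def dd_def by simp
  have n2: "n2 = dd * cc" unfolding cc_def dd_def by simp
  have cop: "coprime bb cc" unfolding bb_def cc_def dd_def using n0 by (intro div_gcd_coprime) simp
  have "dd^2 * aa^2 = dd^2 * (bb^2 + cc^2)" using pyth unfolding l1 l2 n2
    by (simp add: power_mult_distrib algebra_simps)
  then have p: "aa^2 = bb^2 + cc^2" using d0 by simp
  have o1: "aa > bb" using l12 d0 unfolding l1 l2 by (simp add: mult_less_cancel_left)
  have o2: "bb > cc" using l2n d0 unfolding l2 n2 by (simp add: mult_less_cancel_left)
  have o3: "cc > 0" using n0 d0 unfolding n2 by (simp add: zero_less_mult_iff)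
  show ?thesis using nt1[OF cop p o1 o2 o3] nt2[OF cop o2 o3] d0 l1 l2 n2 cop p o1 o2 o3 by blast
qed
end

context trip begin

lemma rotP1: "rot (phi l2 n2) P1 = ((of_int l2^2 - of_int n2^2)/of_int l1, 2 * of_int l2 * of_int n2/of_int l1)"
  using R unfolding rot_def cphi vdefs by (auto simp: field_simps power2_eq_square)
lemma rotP4: "rot (phi l2 n2) P4 = (2 * of_int l2 * of_int n2/of_int l1, (of_int n2^2 - of_int l2^2)/of_int l1)"
  using R unfolding rot_def cphi vdefs by (auto simp: field_simps power2_eq_square)

lemma Xfacts: "2 * real_of_int l2 * of_int n2/of_int l1 \<noteq> of_int l2"
  "2 * real_of_int l2 * of_int n2/of_int l1 \<noteq> of_int n2"
  "2 * real_of_int l2 * of_int n2/of_int l1 > 0"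
  "(real_of_int l2^2 - of_int n2^2)/of_int l1 \<noteq> 0"
  "(real_of_int n2^2 - of_int l2^2)/of_int l1 \<noteq> 0"
proof -
  obtain dd aa bb cc where N: "dd > 0" "l1 = dd * aa" "l2 = dd * bb" "n2 = dd * cc"
    "aa^2 = bb^2 + cc^2" "bb^2 \<noteq> 3 * cc^2" using nt_ex by blast
  show "2 * real_of_int l2 * of_int n2/of_int l1 \<noteq> of_int l2"
  proof
    assume "2 * real_of_int l2 * of_int n2/of_int l1 = of_int l2"
    then have "real_of_int (2 * n2) = of_int l1" using R by (simp add: field_simps)
    then have "2 * n2 = l1" by linarith
    then have "2 * cc = aa" using N by simp
    then show False using N by (auto simp: power2_eq_square)
  qed
  show "2 * real_of_int l2 * of_int n2/of_int l1 \<noteq> of_int n2"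
  proof
    assume "2 * real_of_int l2 * of_int n2/of_int l1 = of_int n2"
    then have "real_of_int (2 * l2) = of_int l1" using R by (simp add: field_simps)
    then have "2 * l2 = l1" by linarith
    then have "3 * l2^2 = n2^2" using pyth by (auto simp: power2_eq_square)
    moreover have "n2^2 < l2^2" using l2n n0 by (simp add: power_strict_mono)
    moreover have "0 \<le> l2^2" by simp
    ultimately show False by linarith
  qed
  show "2 * real_of_int l2 * of_int n2/of_int l1 > 0" using R by simp
  have "real_of_int n2^2 < of_int l2^2" using R by (simp add: power_strict_mono)
  then show "(real_of_int l2^2 - of_int n2^2)/of_int l1 \<noteq> 0"
    "(real_of_int n2^2 - of_int l2^2)/of_int l1 \<noteq> 0" using R by auto
qed

lemma notin_aux: fixes u X :: real
  assumes "X \<noteq> of_int l2" "X \<noteq> of_int n2" "X > 0" "u \<noteq> 0"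
  shows "(u, X) \<notin> set V" "(X, u) \<notin> set V"
  using assms R(1-3) unfolding V_def vdefs by auto

lemma rot_notin: "rot (phi l2 n2) P1 \<notin> set V" "rot (phi l2 n2) P4 \<notin> set V"
  unfolding rotP1 rotP4 using notin_aux Xfacts by auto

lemma rinv: "rot (-phi l2 n2) P1 = Q1" "rot (-phi l2 n2) P4 = - Q2"
  "rot (-phi l2 n2) Q1 = P2" "rot (-phi l2 n2) Q2 = P3"
proof -
  show "rot (-phi l2 n2) P1 = Q1" using rot_inv1[of "phi l2 n2" Q1] rots(1) by simp
  show "rot (-phi l2 n2) Q1 = P2" using rot_inv1[of "phi l2 n2" P2] rots(3) by simp
  show "rot (-phi l2 n2) Q2 = P3" using rot_inv1[of "phi l2 n2" P3] rots(4) by simp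
  have "rot (-phi l2 n2) (- P4) = Q2" using rot_inv1[of "phi l2 n2" Q2] rots(2) by simp
  then show "rot (-phi l2 n2) P4 = - Q2" using rot_neg[of "-phi l2 n2" "P4"] by (metis minus_minus)
qed

lemma inv_g1: "inv gamma1 = gamma1"
  by (rule inv_unique_comp) (auto simp: gamma1_def fun_eq_iff)
lemma inv_g2: "inv gamma2 = gamma2"
  by (rule inv_unique_comp) (auto simp: gamma2_def fun_eq_iff)

lemma g1vals: "gamma1 Q1 = - Q1" "gamma1 Q2 = Q2" "gamma1 P1 = - P2" "gamma1 P2 = - P1"
  "gamma1 P3 = - P4" "gamma1 P4 = - P3" "gamma1 (- k) = - gamma1 k" "gamma1 (gamma1 k) = k"
  by (auto simp: gamma1_def vdefs)
lemma g2vals: "gamma2 Q1 = Q2" "gamma2 Q2 = Q1" "gamma2 P1 = P3" "gamma2 P2 = - P4"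
  "gamma2 P3 = P1" "gamma2 P4 = - P2" "gamma2 (- k) = - gamma2 k" "gamma2 (gamma2 k) = k"
  by (auto simp: gamma2_def vdefs)

lemma lin_g: assumes "\<And>k. g (-k) = - g k" "\<And>k. g (g k) = k" "\<And>k. k \<in> set V \<Longrightarrow> g k \<in> set V"
  "a \<in> Ec l1 l2 n2" shows "(\<lambda>k. a (g k)) \<in> Ec l1 l2 n2"
proof -
  have s: "\<And>k. k \<notin> set V \<Longrightarrow> a k = 0" and c: "\<And>k. a (-k) = cnj (a k)"
    using assms(4) unfolding Ec_def Atilde_V by blast+
  have "a (g k) = 0" if "k \<notin> set V" for k
  proof (rule s)
    show "g k \<notin> set V" using assms(2,3) that by metis
  qed
  moreover have "a (g (-k)) = cnj (a (g k))" for k using assms(1) c by simp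
  ultimately show ?thesis unfolding Ec_def Atilde_V by blast
qed

lemma g1V: "k \<in> set V \<Longrightarrow> gamma1 k \<in> set V"
  unfolding V_def by (auto simp: g1vals)
lemma g2V: "k \<in> set V \<Longrightarrow> gamma2 k \<in> set V"
  unfolding V_def by (auto simp: g2vals)

lemma lin1: assumes "a \<in> Ec l1 l2 n2"
  shows "lin_act gamma1 a = E (a (-Q1)) (a Q2) (a (-P2)) (a (-P1)) (a (-P4)) (a (-P3))"
proof -
  have e: "lin_act gamma1 a = (\<lambda>k. a (gamma1 k))" unfolding lin_act_def inv_g1 ..
  have "(\<lambda>k. a (gamma1 k)) \<in> Ec l1 l2 n2"
    by (rule lin_g[OF _ _ g1V assms]) (simp_all add: g1vals)
  from emb_eq[OF this] show ?thesis unfolding e by (simp add: g1vals)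
qed

lemma lin2: assumes "a \<in> Ec l1 l2 n2"
  shows "lin_act gamma2 a = E (a Q2) (a Q1) (a P3) (a (-P4)) (a P1) (a (-P2))"
proof -
  have e: "lin_act gamma2 a = (\<lambda>k. a (gamma2 k))" unfolding lin_act_def inv_g2 ..
  have "(\<lambda>k. a (gamma2 k)) \<in> Ec l1 l2 n2"
    by (rule lin_g[OF _ _ g2V assms]) (simp_all add: g2vals)
  from emb_eq[OF this] show ?thesis unfolding e by (simp add: g2vals)
qed

end


locale eqv = trip +
  fixes F :: "wfun \<Rightarrow> wfun"
  assumes cl: "\<forall>a\<in>Ec l1 l2 n2. F a \<in> Ec l1 l2 n2" and ge: "Gamma_equivariant l1 l2 n2 F"
begin

lemma FE_Ec: "F (E z1 z2 w1 w2 w3 w4) \<in> Ec l1 l2 n2" using cl emb_Ec by blast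
lemma FE_cnj: "F (E z1 z2 w1 w2 w3 w4) (- k) = cnj (F (E z1 z2 w1 w2 w3 w4) k)"
  using FE_Ec unfolding Ec_def by blast
lemma FE_supp: "F (E z1 z2 w1 w2 w3 w4) k \<noteq> 0 \<Longrightarrow> k \<in> set V"
  using FE_Ec unfolding Ec_def Atilde_V by blast

lemma FG1: assumes "a \<in> Ec l1 l2 n2"
  shows "F (E (a (-Q1)) (a Q2) (a (-P2)) (a (-P1)) (a (-P4)) (a (-P3))) k = F a (gamma1 k)"
proof -
  have "F (lin_act gamma1 a) = lin_act gamma1 (F a)" using ge assms unfolding Gamma_equivariant_def by blast
  then show ?thesis unfolding lin1[OF assms] by (simp add: lin_act_def inv_g1)
qed
lemma FG2: assumes "a \<in> Ec l1 l2 n2"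
  shows "F (E (a Q2) (a Q1) (a P3) (a (-P4)) (a P1) (a (-P2))) k = F a (gamma2 k)"
proof -
  have "F (lin_act gamma2 a) = lin_act gamma2 (F a)" using ge assms unfolding Gamma_equivariant_def by blast
  then show ?thesis unfolding lin2[OF assms] by (simp add: lin_act_def inv_g2)
qed

lemma iso: assumes a: "a \<in> Ec l1 l2 n2"
  and i: "\<And>k. a k \<noteq> 0 \<Longrightarrow> \<exists>m::int. s * fst k + t * snd k = 2 * pi * of_int m"
  and n: "\<not> (\<exists>m::int. s * fst k0 + t * snd k0 = 2 * pi * of_int m)"
  shows "F a k0 = 0"
proof -
  have T: "trans_act s t a = a"
  proof
    fix k show "trans_act s t a k = a k"
    proof (cases "a k = 0")
      case True thus ?thesis by (simp add: trans_act_def)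
    next
      case False
      then obtain m where m: "s * fst k + t * snd k = 2 * pi * of_int m" using i by blast
      have "exp (- \<i> * complex_of_real (s * fst k + t * snd k)) = 1"
        unfolding m exp_eq_1 by (auto intro!: exI[of _ "-m"])
      thus ?thesis by (simp add: trans_act_def)
    qed
  qed
  have "F a = trans_act s t (F a)" using ge a T unfolding Gamma_equivariant_def by metis
  then have e: "F a k0 = exp (- \<i> * complex_of_real (s * fst k0 + t * snd k0)) * F a k0"
    by (metis trans_act_def)
  have "exp (- \<i> * complex_of_real (s * fst k0 + t * snd k0)) \<noteq> 1"
  proof
    assume "exp (- \<i> * complex_of_real (s * fst k0 + t * snd k0)) = 1"
    then obtain n' :: int where "- (s * fst k0 + t * snd k0) = of_int (2 * n') * pi"
      unfolding exp_eq_1 by auto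
    then have "s * fst k0 + t * snd k0 = 2 * pi * of_int (- n')" by (simp add: algebra_simps)
    then show False using n by blast
  qed
  then show ?thesis using e by (metis mult_cancel_right1)
qed

lemma iso8: assumes a: "a \<in> Ec l1 l2 n2"
  and sp: "\<And>k. a k \<noteq> 0 \<Longrightarrow> k \<in> {A, -A, B, -B, C, -C, D, -D}"
  and iA: "s * fst A + t * snd A = 2 * pi * of_int mA"
  and iB: "s * fst B + t * snd B = 2 * pi * of_int mB"
  and iC: "s * fst C + t * snd C = 2 * pi * of_int mC"
  and iD: "s * fst D + t * snd D = 2 * pi * of_int mD"
  and n: "\<not> (\<exists>m::int. s * fst k0 + t * snd k0 = 2 * pi * of_int m)"
  shows "F a k0 = 0"
proof (rule iso[OF a _ n])
  fix k assume "a k \<noteq> 0"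
  then have "k \<in> {A, -A, B, -B, C, -C, D, -D}" by (rule sp)
  then show "\<exists>m::int. s * fst k + t * snd k = 2 * pi * of_int m"
  proof (elim insertE emptyE)
    assume "k = A" thus ?thesis using iA by blast
  next assume "k = -A" thus ?thesis using iA by (intro exI[of _ "-mA"]) (simp add: algebra_simps)
  next assume "k = B" thus ?thesis using iB by blast
  next assume "k = -B" thus ?thesis using iB by (intro exI[of _ "-mB"]) (simp add: algebra_simps)
  next assume "k = C" thus ?thesis using iC by blast
  next assume "k = -C" thus ?thesis using iC by (intro exI[of _ "-mC"]) (simp add: algebra_simps)
  next assume "k = D" thus ?thesis using iD by blast
  next assume "k = -D" thus ?thesis using iD by (intro exI[of _ "-mD"]) (simp add: algebra_simps)
  qed
qed

lemma suppPhi: "E z1 z2 0 w2 w3 0 k \<noteq> 0 \<Longrightarrow> k \<in> {Q1, -Q1, Q2, -Q2, P2, -P2, P3, -P3}"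
  unfolding emb_def by (auto split: if_splits)
lemma suppPsi: "E z1 z2 w1 0 0 w4 k \<noteq> 0 \<Longrightarrow> k \<in> {Q1, -Q1, Q2, -Q2, P1, -P1, P4, -P4}"
  unfolding emb_def by (auto split: if_splits)

end


lemma nonint: fixes aa z :: int assumes "\<not> aa dvd z" "aa \<noteq> 0"
  shows "\<not> (\<exists>m::int. 2 * pi * of_int z / of_int aa = 2 * pi * of_int m)"
proof
  assume "\<exists>m::int. 2 * pi * of_int z / of_int aa = 2 * pi * of_int m"
  then obtain m :: int where "2 * pi * of_int z / of_int aa = 2 * pi * of_int m" by blast
  then have "real_of_int z = of_int (aa * m)" using assms(2) by (simp add: field_simps)
  then have "z = aa * m" by linarith
  then show False using assms(1) by simp
qed

context eqv begin

lemma kills: "F (E z1 z2 0 w2 w3 0) P1 = 0" "F (E z1 z2 0 w2 w3 0) P4 = 0"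
  "F (E z1 z2 w1 0 0 w4) P2 = 0" "F (E z1 z2 w1 0 0 w4) P3 = 0"
proof -
  obtain dd aa bb cc where N: "dd > 0" "l1 = dd * aa" "l2 = dd * bb" "n2 = dd * cc"
    "aa^2 = bb^2 + cc^2" "aa > bb" "bb > cc" "cc > 0" "\<not> aa dvd (bb^2 - cc^2)" using nt_ex by blast
  have N': "\<not> aa dvd (cc^2 - bb^2)" using N(9) by (metis dvd_minus_iff minus_diff_eq)
  have a0: "real_of_int aa \<noteq> 0" "real_of_int dd \<noteq> 0" using N by auto
  have rl: "real_of_int l1 = of_int dd * of_int aa" "real_of_int l2 = of_int dd * of_int bb"
    "real_of_int n2 = of_int dd * of_int cc" using N by simp_all
  have rp: "real_of_int aa * of_int aa = of_int bb * of_int bb + of_int cc * of_int cc"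
    using N(5) by (metis of_int_add of_int_mult power2_eq_square)
  have rp2: "real_of_int aa * (of_int aa * 2) = of_int bb * (of_int bb * 2) + of_int cc * (of_int cc * 2)"
    using rp by linarith
  note simps = vdefs rl field_simps a0
  {
    fix s t :: real assume st: "s = 2 * pi * of_int bb / (of_int aa * of_int dd)"
      "t = - (2 * pi * of_int cc / (of_int aa * of_int dd))"
    have "F (E z1 z2 0 w2 w3 0) P1 = 0"
    proof (rule iso8[OF emb_Ec suppPhi])
      show "s * fst Q1 + t * snd Q1 = 2 * pi * of_int bb" using a0 by (simp add: st simps)
      show "s * fst Q2 + t * snd Q2 = 2 * pi * of_int (- cc)" using a0 by (simp add: st simps)
      show "s * fst P2 + t * snd P2 = 2 * pi * of_int aa" using a0 by (simp add: st simps) (simp add: rp2 distrib_left)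
      show "s * fst P3 + t * snd P3 = 2 * pi * of_int 0" using a0 by (simp add: st simps)
      have "s * fst P1 + t * snd P1 = 2 * pi * of_int (bb^2 - cc^2) / of_int aa"
        using a0 by (simp add: st simps power2_eq_square)
      then show "\<not> (\<exists>m::int. s * fst P1 + t * snd P1 = 2 * pi * of_int m)"
        using nonint[OF N(9)] a0 by simp
    qed
  }
  then show "F (E z1 z2 0 w2 w3 0) P1 = 0" by blast
  {
    fix s t :: real assume st: "s = 2 * pi * of_int cc / (of_int aa * of_int dd)"
      "t = 2 * pi * of_int bb / (of_int aa * of_int dd)"
    have "F (E z1 z2 0 w2 w3 0) P4 = 0"
    proof (rule iso8[OF emb_Ec suppPhi])
      show "s * fst Q1 + t * snd Q1 = 2 * pi * of_int cc" using a0 by (simp add: st simps)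
      show "s * fst Q2 + t * snd Q2 = 2 * pi * of_int bb" using a0 by (simp add: st simps)
      show "s * fst P2 + t * snd P2 = 2 * pi * of_int 0" using a0 by (simp add: st simps)
      show "s * fst P3 + t * snd P3 = 2 * pi * of_int aa" using a0 by (simp add: st simps) (simp add: rp2 distrib_left)
      have "s * fst P4 + t * snd P4 = 2 * pi * of_int (cc^2 - bb^2) / of_int aa"
        using a0 by (simp add: st simps power2_eq_square)
      then show "\<not> (\<exists>m::int. s * fst P4 + t * snd P4 = 2 * pi * of_int m)"
        using nonint[OF N'] a0 by simp
    qed
  }
  then show "F (E z1 z2 0 w2 w3 0) P4 = 0" by blast
  {
    fix s t :: real assume st: "s = 2 * pi * of_int bb / (of_int aa * of_int dd)"
      "t = 2 * pi * of_int cc / (of_int aa * of_int dd)"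
    have "F (E z1 z2 w1 0 0 w4) P2 = 0"
    proof (rule iso8[OF emb_Ec suppPsi])
      show "s * fst Q1 + t * snd Q1 = 2 * pi * of_int bb" using a0 by (simp add: st simps)
      show "s * fst Q2 + t * snd Q2 = 2 * pi * of_int cc" using a0 by (simp add: st simps)
      show "s * fst P1 + t * snd P1 = 2 * pi * of_int aa" using a0 by (simp add: st simps) (simp add: rp2 distrib_left)
      show "s * fst P4 + t * snd P4 = 2 * pi * of_int 0" using a0 by (simp add: st simps)
      have "s * fst P2 + t * snd P2 = 2 * pi * of_int (bb^2 - cc^2) / of_int aa"
        using a0 by (simp add: st simps power2_eq_square)
      then show "\<not> (\<exists>m::int. s * fst P2 + t * snd P2 = 2 * pi * of_int m)"
        using nonint[OF N(9)] a0 by simp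
    qed
  }
  then show "F (E z1 z2 w1 0 0 w4) P2 = 0" by blast
  {
    fix s t :: real assume st: "s = 2 * pi * of_int cc / (of_int aa * of_int dd)"
      "t = - (2 * pi * of_int bb / (of_int aa * of_int dd))"
    have "F (E z1 z2 w1 0 0 w4) P3 = 0"
    proof (rule iso8[OF emb_Ec suppPsi])
      show "s * fst Q1 + t * snd Q1 = 2 * pi * of_int cc" using a0 by (simp add: st simps)
      show "s * fst Q2 + t * snd Q2 = 2 * pi * of_int (- bb)" using a0 by (simp add: st simps)
      show "s * fst P1 + t * snd P1 = 2 * pi * of_int 0" using a0 by (simp add: st simps)
      show "s * fst P4 + t * snd P4 = 2 * pi * of_int aa" using a0 by (simp add: st simps) (simp add: rp2 distrib_left)
      have "s * fst P3 + t * snd P3 = 2 * pi * of_int (cc^2 - bb^2) / of_int aa"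
        using a0 by (simp add: st simps power2_eq_square)
      then show "\<not> (\<exists>m::int. s * fst P3 + t * snd P3 = 2 * pi * of_int m)"
        using nonint[OF N'] a0 by simp
    qed
  }
  then show "F (E z1 z2 w1 0 0 w4) P3 = 0" by blast
qed

end


context trip begin

lemma Sback: "k \<in> {Q1, -Q1, Q2, -Q2, P1, -P1, P4, -P4} \<Longrightarrow>
  rot (-phi l2 n2) k \<in> {Q1, -Q1, Q2, -Q2, P2, -P2, P3, -P3}"
  by (auto simp: rinv rot_neg)

lemma sPhi: "E z1 z2 0 w2 w3 0 k \<noteq> 0 \<Longrightarrow> k \<in> {Q1, -Q1, Q2, -Q2, P2, -P2, P3, -P3}"
  unfolding emb_def by (auto split: if_splits)
lemma sPsi: "E z1 z2 w1 0 0 w4 k \<noteq> 0 \<Longrightarrow> k \<in> {Q1, -Q1, Q2, -Q2, P1, -P1, P4, -P4}"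
  unfolding emb_def by (auto split: if_splits)

lemma transfer:
  assumes 1: "\<And>j. j \<in> {Q1, -Q1, Q2, -Q2, P2, -P2, P3, -P3} \<Longrightarrow> X j = Y (rot (phi l2 n2) j)"
    and 2: "\<And>j. X j \<noteq> 0 \<Longrightarrow> j \<in> {Q1, -Q1, Q2, -Q2, P2, -P2, P3, -P3}"
    and 3: "\<And>k. Y k \<noteq> 0 \<Longrightarrow> k \<in> {Q1, -Q1, Q2, -Q2, P1, -P1, P4, -P4}"
  shows "rot_act (phi l2 n2) X = Y"
proof
  fix k
  define j where "j = rot (-phi l2 n2) k"
  have k: "rot (phi l2 n2) j = k" unfolding j_def by (rule rot_inv2)
  show "rot_act (phi l2 n2) X k = Y k"
  proof (cases "j \<in> {Q1, -Q1, Q2, -Q2, P2, -P2, P3, -P3}")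
    case True
    then show ?thesis using 1[OF True] k unfolding rot_act_def j_def by simp
  next
    case False
    then have "X j = 0" using 2 by blast
    moreover have "Y k = 0" using 3 Sback False unfolding j_def by blast
    ultimately show ?thesis unfolding rot_act_def j_def by simp
  qed
qed

lemma PhiRot: "rot_act (phi l2 n2) (E z1 z2 0 w2 w3 0) = E w2 w3 z1 0 0 (cnj z2)"
proof (rule transfer)
  fix j assume "j \<in> {Q1, -Q1, Q2, -Q2, P2, -P2, P3, -P3}"
  then show "E z1 z2 0 w2 w3 0 j = E w2 w3 z1 0 0 (cnj z2) (rot (phi l2 n2) j)"
    by (auto simp: rots rot_neg emb_vals)
qed (auto dest: sPhi sPsi)

end

context eqv begin

lemma eqs:
  assumes H: "\<And>z1 z2 w2 w3. F (E z1 z2 0 w2 w3 0) Q1 = F (E w2 w3 z1 0 0 (cnj z2)) P1"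
  shows "F (E z1 z2 0 w2 w3 0) P2 = F (E w2 w3 z1 0 0 (cnj z2)) Q1"
    "F (E z1 z2 0 w2 w3 0) P3 = F (E w2 w3 z1 0 0 (cnj z2)) Q2"
    "F (E z1 z2 0 w2 w3 0) Q2 = F (E w2 w3 z1 0 0 (cnj z2)) (-P4)"
proof -
  have s1: "F (E (cnj z1) z2 (cnj w2) 0 0 (cnj w3)) (-P1) = F (E z1 z2 0 w2 w3 0) P2"
    using FG1[OF emb_Ec, of z1 z2 0 w2 w3 0 "-P1"] by (simp add: emb_vals g1vals)
  have s2: "F (E (cnj w2) w3 0 (cnj z1) z2 0) (-Q1) = F (E w2 w3 z1 0 0 (cnj z2)) Q1"
    using FG1[OF emb_Ec, of w2 w3 z1 0 0 "cnj z2" "-Q1"] by (simp add: emb_vals g1vals)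
  show "F (E z1 z2 0 w2 w3 0) P2 = F (E w2 w3 z1 0 0 (cnj z2)) Q1"
    using s1 s2 H[of "cnj w2" w3 "cnj z1" z2] FE_cnj by (metis complex_cnj_cnj)
next
  have s1: "F (E z2 z1 w3 0 0 (cnj w2)) P1 = F (E z1 z2 0 w2 w3 0) P3"
    using FG2[OF emb_Ec, of z1 z2 0 w2 w3 0 P1] by (simp add: emb_vals g2vals)
  have s2: "F (E w3 w2 0 z2 z1 0) Q1 = F (E w2 w3 z1 0 0 (cnj z2)) Q2"
    using FG2[OF emb_Ec, of w2 w3 z1 0 0 "cnj z2" Q1] by (simp add: emb_vals g2vals)
  show "F (E z1 z2 0 w2 w3 0) P3 = F (E w2 w3 z1 0 0 (cnj z2)) Q2"
    using s1 s2 H[of w3 w2 z2 z1] by metis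
next
  have s1: "F (E z2 z1 w3 0 0 (cnj w2)) Q1 = F (E z1 z2 0 w2 w3 0) Q2"
    using FG2[OF emb_Ec, of z1 z2 0 w2 w3 0 Q1] by (simp add: emb_vals g2vals)
  have s2: "F (E (cnj z2) z1 0 (cnj w3) w2 0) (-Q1) = F (E z2 z1 w3 0 0 (cnj w2)) Q1"
    using FG1[OF emb_Ec, of z2 z1 w3 0 0 "cnj w2" "-Q1"] by (simp add: emb_vals g1vals)
  have s3: "F (E w3 w2 0 z2 z1 0) P2 = F (E w2 w3 z1 0 0 (cnj z2)) (-P4)"
    using FG2[OF emb_Ec, of w2 w3 z1 0 0 "cnj z2" P2] by (simp add: emb_vals g2vals)
  have s4: "F (E (cnj w3) w2 (cnj z2) 0 0 (cnj z1)) (-P1) = F (E w3 w2 0 z2 z1 0) P2"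
    using FG1[OF emb_Ec, of w3 w2 0 z2 z1 0 "-P1"] by (simp add: emb_vals g1vals)
  show "F (E z1 z2 0 w2 w3 0) Q2 = F (E w2 w3 z1 0 0 (cnj z2)) (-P4)"
    using s1 s2 s3 s4 H[of "cnj z2" z1 "cnj w3" w2] FE_cnj by metis
qed

end


context trip begin

lemma part1: "Ec l1 l2 n2 \<inter> rot_act (- phi l2 n2) ` Ec l1 l2 n2
           = {E z1 z2 0 w2 w3 0 | z1 z2 w2 w3. True}"
proof
  show "Ec l1 l2 n2 \<inter> rot_act (- phi l2 n2) ` Ec l1 l2 n2 \<subseteq> {E z1 z2 0 w2 w3 0 | z1 z2 w2 w3. True}"
  proof
    fix a assume "a \<in> Ec l1 l2 n2 \<inter> rot_act (- phi l2 n2) ` Ec l1 l2 n2"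
    then obtain b where a: "a \<in> Ec l1 l2 n2" and b: "b \<in> Ec l1 l2 n2" and ab: "a = rot_act (- phi l2 n2) b"
      by blast
    have ap: "a k = b (rot (phi l2 n2) k)" for k unfolding ab rot_act_def by simp
    have bs: "\<And>k. k \<notin> set V \<Longrightarrow> b k = 0" using b unfolding Ec_def Atilde_V by blast
    have "a P1 = 0" "a P4 = 0" unfolding ap using bs rot_notin by auto
    then have "a = E (a Q1) (a Q2) 0 (a P2) (a P3) 0" using emb_eq[OF a] by (simp only:)
    then show "a \<in> {E z1 z2 0 w2 w3 0 | z1 z2 w2 w3. True}" by blast
  qed
next
  show "{E z1 z2 0 w2 w3 0 | z1 z2 w2 w3. True} \<subseteq> Ec l1 l2 n2 \<inter> rot_act (- phi l2 n2) ` Ec l1 l2 n2"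
  proof
    fix a assume "a \<in> {E z1 z2 0 w2 w3 0 | z1 z2 w2 w3. True}"
    then obtain z1 z2 w2 w3 where a: "a = E z1 z2 0 w2 w3 0" by blast
    have "a = rot_act (- phi l2 n2) (rot_act (phi l2 n2) a)"
      unfolding rot_act_def by (simp add: rot_inv1)
    moreover have "rot_act (phi l2 n2) a \<in> Ec l1 l2 n2" unfolding a PhiRot by (rule emb_Ec)
    ultimately show "a \<in> Ec l1 l2 n2 \<inter> rot_act (- phi l2 n2) ` Ec l1 l2 n2"
      using emb_Ec a by blast
  qed
qed

end

context eqv begin

lemma main_eqv: "(\<forall>\<Phi>\<in>Ec l1 l2 n2 \<inter> rot_act (- phi l2 n2) ` Ec l1 l2 n2.
            rot_act (phi l2 n2) (F \<Phi>) = F (rot_act (phi l2 n2) \<Phi>))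
        \<longleftrightarrow> (\<forall>z1 z2 w2 w3. f_comp l1 l2 n2 F z1 z2 0 w2 w3 0
                              = h_comp l1 l2 n2 F w2 w3 z1 0 0 (cnj z2))"
  unfolding part1 f_comp_def h_comp_def
proof (intro iffI allI ballI)
  fix z1 z2 w2 w3
  assume L: "\<forall>\<Phi>\<in>{E z1 z2 0 w2 w3 0 | z1 z2 w2 w3. True}. rot_act (phi l2 n2) (F \<Phi>) = F (rot_act (phi l2 n2) \<Phi>)"
  have "E z1 z2 0 w2 w3 0 \<in> {E z1 z2 0 w2 w3 0 | z1 z2 w2 w3. True}" by blast
  with L have "rot_act (phi l2 n2) (F (E z1 z2 0 w2 w3 0)) = F (rot_act (phi l2 n2) (E z1 z2 0 w2 w3 0))"
    by blast
  then have "rot_act (phi l2 n2) (F (E z1 z2 0 w2 w3 0)) = F (E w2 w3 z1 0 0 (cnj z2))"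
    unfolding PhiRot .
  then have "rot_act (phi l2 n2) (F (E z1 z2 0 w2 w3 0)) P1 = F (E w2 w3 z1 0 0 (cnj z2)) P1" by simp
  then show "F (E z1 z2 0 w2 w3 0) Q1 = F (E w2 w3 z1 0 0 (cnj z2)) P1"
    unfolding rot_act_def rinv by simp
next
  fix \<Phi>
  assume H0: "\<forall>z1 z2 w2 w3. F (E z1 z2 0 w2 w3 0) Q1 = F (E w2 w3 z1 0 0 (cnj z2)) P1"
  then have H: "\<And>z1 z2 w2 w3. F (E z1 z2 0 w2 w3 0) Q1 = F (E w2 w3 z1 0 0 (cnj z2)) P1" by blast
  assume "\<Phi> \<in> {E z1 z2 0 w2 w3 0 | z1 z2 w2 w3. True}"
  then obtain z1 z2 w2 w3 where P: "\<Phi> = E z1 z2 0 w2 w3 0" by blast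
  note e = eqs[OF H, of z1 z2 w2 w3]
  show "rot_act (phi l2 n2) (F \<Phi>) = F (rot_act (phi l2 n2) \<Phi>)"
    unfolding P PhiRot
  proof (rule transfer)
    fix j assume "j \<in> {Q1, -Q1, Q2, -Q2, P2, -P2, P3, -P3}"
    then show "F (E z1 z2 0 w2 w3 0) j = F (E w2 w3 z1 0 0 (cnj z2)) (rot (phi l2 n2) j)"
      using e H[of z1 z2 w2 w3] by (auto simp: rots rot_neg FE_cnj)
  next
    fix j assume "F (E z1 z2 0 w2 w3 0) j \<noteq> 0"
    moreover have "j \<in> set V" using calculation by (rule FE_supp)
    moreover have "F (E z1 z2 0 w2 w3 0) (- P1) = 0" "F (E z1 z2 0 w2 w3 0) (- P4) = 0"
      using kills by (simp_all add: FE_cnj)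
    ultimately show "j \<in> {Q1, -Q1, Q2, -Q2, P2, -P2, P3, -P3}"
      using kills unfolding V_def by auto
  next
    fix j assume "F (E w2 w3 z1 0 0 (cnj z2)) j \<noteq> 0"
    moreover have "j \<in> set V" using calculation by (rule FE_supp)
    moreover have "F (E w2 w3 z1 0 0 (cnj z2)) (- P2) = 0" "F (E w2 w3 z1 0 0 (cnj z2)) (- P3) = 0"
      using kills by (simp_all add: FE_cnj)
    ultimately show "j \<in> {Q1, -Q1, Q2, -Q2, P1, -P1, P4, -P4}"
      using kills unfolding V_def by auto
  qed
qed

end

lemma C12: "(\<forall>z1 z2 w2 w3. f_comp l1 l2 n2 F z1 z2 0 w2 w3 0
                              = h_comp l1 l2 n2 F w2 w3 z1 0 0 (cnj z2))
   \<longleftrightarrow> (\<forall>z1 z2 w1 w4. h_comp l1 l2 n2 F z1 z2 w1 0 0 w4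
                              = f_comp l1 l2 n2 F w1 (cnj w4) 0 z1 z2 0)"
proof (intro iffI allI)
  fix z1 z2 w1 w4
  assume "\<forall>z1 z2 w2 w3. f_comp l1 l2 n2 F z1 z2 0 w2 w3 0 = h_comp l1 l2 n2 F w2 w3 z1 0 0 (cnj z2)"
  then have "f_comp l1 l2 n2 F w1 (cnj w4) 0 z1 z2 0 = h_comp l1 l2 n2 F z1 z2 w1 0 0 (cnj (cnj w4))" by blast
  then show "h_comp l1 l2 n2 F z1 z2 w1 0 0 w4 = f_comp l1 l2 n2 F w1 (cnj w4) 0 z1 z2 0" by simp
next
  fix z1 z2 w2 w3
  assume "\<forall>z1 z2 w1 w4. h_comp l1 l2 n2 F z1 z2 w1 0 0 w4 = f_comp l1 l2 n2 F w1 (cnj w4) 0 z1 z2 0"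
  then have "h_comp l1 l2 n2 F w2 w3 z1 0 0 (cnj z2) = f_comp l1 l2 n2 F z1 (cnj (cnj z2)) 0 w2 w3 0" by blast
  then show "f_comp l1 l2 n2 F z1 z2 0 w2 w3 0 = h_comp l1 l2 n2 F w2 w3 z1 0 0 (cnj z2)" by simp
qed

theorem mainTheorem8:
  fixes l1 l2 n2 :: int and F :: "wfun \<Rightarrow> wfun"
  assumes "l1 > l2" and "l2 > n2" and "n2 > 0" and "l1^2 = l2^2 + n2^2"
    and "\<forall>a\<in>Ec l1 l2 n2. F a \<in> Ec l1 l2 n2"
    and "Gamma_equivariant l1 l2 n2 F"
  shows "Ec l1 l2 n2 \<inter> rot_act (- phi l2 n2) ` Ec l1 l2 n2
           = {emb l1 l2 n2 z1 z2 0 w2 w3 0 | z1 z2 w2 w3. True}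
    \<and> ((\<forall>\<Phi>\<in>Ec l1 l2 n2 \<inter> rot_act (- phi l2 n2) ` Ec l1 l2 n2.
            rot_act (phi l2 n2) (F \<Phi>) = F (rot_act (phi l2 n2) \<Phi>))
        \<longleftrightarrow> (\<forall>z1 z2 w2 w3. f_comp l1 l2 n2 F z1 z2 0 w2 w3 0
                              = h_comp l1 l2 n2 F w2 w3 z1 0 0 (cnj z2)))
    \<and> ((\<forall>\<Phi>\<in>Ec l1 l2 n2 \<inter> rot_act (- phi l2 n2) ` Ec l1 l2 n2.
            rot_act (phi l2 n2) (F \<Phi>) = F (rot_act (phi l2 n2) \<Phi>))
        \<longleftrightarrow> (\<forall>z1 z2 w1 w4. h_comp l1 l2 n2 F z1 z2 w1 0 0 w4
                              = f_comp l1 l2 n2 F w1 (cnj w4) 0 z1 z2 0))"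
proof -
  interpret eqv l1 l2 n2 F using assms by unfold_locales auto
  show ?thesis using part1 main_eqv C12 by simp
qed


end
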